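(* Let $K,L\subseteq\Sigma^*$ be regular languages with $\kappa(K)=m\ge 2$ and $\kappa(L)=n\ge 2$. If $K$ and $L$ are both prefix-closed, or both factor-closed, or both subword-closed, then: - $\kappa(K\cap L)\le mn-(m+n-2)$; - $\kappa(K\cup L)\le mn$ and $\kappa(K\oplus L)\le mn$; - $\kappa(K\setminus L)\le mn-(n-1)$. If $K$ and $L$ are both suffix-closed, then $\kappa(K\circ L)\le mn$ for each of $\circ\in\{\cup,\cap,\setminus,\oplus\}$. All these bounds are tight: for every $m,n\ge 2$, every alphabet with $|\Sigma|\ge 4$, each of these classes and each listed operation, there exist languages in that class over $\Sigma$ with $\kappa(K)=m$, $\kappa(L)=n$ that attain the stated bound.
   Context: $\Sigma$ is a finite non-empty alphabet. For $L\subseteq\Sigma^*$ and $w\in\Sigma^*$, $L_w=\{x\mid wx\in L\}$, and $\kappa(L)$ is the number of distinct quotients $L_w$ (the state complexity of $L$). $K\oplus L$ is symmetric difference. A language $L$ is prefix-closed (suffix-, factor-, subword-closed) if whenever $w\in L$, every prefix (suffix, factor, subword) of $w$ is in $L$. Here $x$ is a factor of $w$ if $w=uxv$, and $a_1\cdots a_n$ is a subword of $w$ if $w=w_0a_1w_1\cdots a_nw_n$ for some words $w_i$, i.e. a scattered subsequence. *)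

theory Defs
  imports Main "HOL-Library.Sublist"
begin

text \<open>Words over an alphabet Sigma are lists; languages are sets of lists contained in lists Sigma.\<close>

definition quotient_lang :: "'a list set \<Rightarrow> 'a list \<Rightarrow> 'a list set" where
  "quotient_lang L w = {x. w @ x \<in> L}"

definition kappa :: "'a set \<Rightarrow> 'a list set \<Rightarrow> nat" where
  "kappa \<Sigma> L = card {quotient_lang L w | w. w \<in> lists \<Sigma>}"

definition regular :: "'a set \<Rightarrow> 'a list set \<Rightarrow> bool" where
  "regular \<Sigma> L \<longleftrightarrow> L \<subseteq> lists \<Sigma> \<and>
     (\<exists>(Q :: nat set) (\<delta> :: nat \<Rightarrow> 'a \<Rightarrow> nat) q0 F.
        finite Q \<and> q0 \<in> Q \<and> F \<subseteq> Q \<and> (\<forall>q\<in>Q. \<forall>a\<in>\<Sigma>. \<delta> q a \<in> Q) \<and>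
        L = {w \<in> lists \<Sigma>. foldl \<delta> q0 w \<in> F})"

definition symdiff :: "'a set \<Rightarrow> 'a set \<Rightarrow> 'a set" where
  "symdiff K L = (K - L) \<union> (L - K)"

definition prefix_closed :: "'a list set \<Rightarrow> bool" where
  "prefix_closed L \<longleftrightarrow> (\<forall>w\<in>L. \<forall>u. prefix u w \<longrightarrow> u \<in> L)"

definition suffix_closed :: "'a list set \<Rightarrow> bool" where
  "suffix_closed L \<longleftrightarrow> (\<forall>w\<in>L. \<forall>u. suffix u w \<longrightarrow> u \<in> L)"

text \<open>Factor = contiguous sublist (library notion sublist).\<close>
definition factor_closed :: "'a list set \<Rightarrow> bool" where
  "factor_closed L \<longleftrightarrow> (\<forall>w\<in>L. \<forall>u. sublist u w \<longrightarrow> u \<in> L)"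

text \<open>Subword = scattered subsequence (library notion subseq).\<close>
definition subword_closed :: "'a list set \<Rightarrow> bool" where
  "subword_closed L \<longleftrightarrow> (\<forall>w\<in>L. \<forall>u. subseq u w \<longrightarrow> u \<in> L)"

end

theory Submission
  imports Defs
begin

abbreviation QS :: "'a set \<Rightarrow> 'a list set \<Rightarrow> 'a list set set" where
  "QS \<Sigma> L \<equiv> {quotient_lang L w | w. w \<in> lists \<Sigma>}"

lemma quot_app: "quotient_lang (quotient_lang L w) v = quotient_lang L (w @ v)"
  by (auto simp: quotient_lang_def)

lemma quot_nil: "quotient_lang L [] = L"
  by (auto simp: quotient_lang_def)

lemma regularI:
  assumes sub: "L \<subseteq> lists \<Sigma>" and fin: "finite (QS \<Sigma> L)"
  shows "regular \<Sigma> L"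
proof -
  obtain N :: nat and g where S: "QS \<Sigma> L = g ` {i. i < N}" and inj: "inj_on g {i. i < N}"
    using finite_imp_nat_seg_image_inj_on[OF fin] by blast
  define h where "h = the_inv_into {i. i < N} g"
  have hQ: "X \<in> QS \<Sigma> L \<Longrightarrow> h X \<in> {i. i < N}" for X
    unfolding h_def using S the_inv_into_into[OF inj, of X "{i. i < N}"] by simp
  have gh: "X \<in> QS \<Sigma> L \<Longrightarrow> g (h X) = X" for X
    unfolding h_def using S f_the_inv_into_f[OF inj, of X] by simp
  define \<delta> where "\<delta> q a = h (quotient_lang (g q) [a])" for q a
  define q0 where "q0 = h L"
  define F where "F = {q \<in> {i. i < N}. [] \<in> g q}"
  have "quotient_lang L [] \<in> QS \<Sigma> L" by auto
  then have Lin: "L \<in> QS \<Sigma> L" by (simp add: quot_nil)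
  have qin: "w \<in> lists \<Sigma> \<Longrightarrow> quotient_lang L w \<in> QS \<Sigma> L" for w by blast
  have run: "w \<in> lists \<Sigma> \<Longrightarrow> foldl \<delta> q0 w = h (quotient_lang L w)" for w
  proof (induction w rule: rev_induct)
    case Nil show ?case by (simp add: q0_def quot_nil)
  next
    case (snoc a w)
    then have w: "w \<in> lists \<Sigma>" by simp
    have "foldl \<delta> q0 (w @ [a]) = \<delta> (foldl \<delta> q0 w) a" by simp
    also have "\<dots> = \<delta> (h (quotient_lang L w)) a" using snoc.IH w by simp
    also have "\<dots> = h (quotient_lang (g (h (quotient_lang L w))) [a])" by (simp add: \<delta>_def)
    also have "\<dots> = h (quotient_lang L (w @ [a]))" using gh[OF qin[OF w]] by (simp add: quot_app)
    finally show ?case .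
  qed
  have C1: "finite {i. i < N}" by simp
    have C2: "q0 \<in> {i. i < N}" unfolding q0_def using hQ[OF Lin] .
    have C3: "F \<subseteq> {i. i < N}" unfolding F_def by blast
    have C4: "\<forall>q\<in>{i. i < N}. \<forall>a\<in>\<Sigma>. \<delta> q a \<in> {i. i < N}"
    proof (intro ballI)
      fix q a assume q: "q \<in> {i. i < N}" and a: "a \<in> \<Sigma>"
      then obtain w where w: "w \<in> lists \<Sigma>" "g q = quotient_lang L w" using S by blast
      then have "quotient_lang (g q) [a] = quotient_lang L (w @ [a])" by (simp add: quot_app)
      moreover have "w @ [a] \<in> lists \<Sigma>" using w a by simp
      ultimately show "\<delta> q a \<in> {i. i < N}" unfolding \<delta>_def using hQ[OF qin[of "w @ [a]"]] by simp
    qed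
    have C5: "L = {w \<in> lists \<Sigma>. foldl \<delta> q0 w \<in> F}"
    proof (rule set_eqI)
      fix w show "w \<in> L \<longleftrightarrow> w \<in> {w \<in> lists \<Sigma>. foldl \<delta> q0 w \<in> F}"
      proof (cases "w \<in> lists \<Sigma>")
        case True
        have e: "foldl \<delta> q0 w = h (quotient_lang L w)" using run[OF True] .
        have "w \<in> L \<longleftrightarrow> [] \<in> quotient_lang L w" by (simp add: quotient_lang_def)
        also have "\<dots> \<longleftrightarrow> [] \<in> g (h (quotient_lang L w))" using gh[OF qin[OF True]] by simp
        also have "\<dots> \<longleftrightarrow> foldl \<delta> q0 w \<in> F" unfolding F_def e using hQ[OF qin[OF True]] by simp
        finally show ?thesis using True by simp
      next
        case False then show ?thesis using sub by auto
      qed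
    qed
  show ?thesis unfolding regular_def
    apply (rule conjI[OF sub])
    apply (rule exI[of _ "{i. i < N}"], rule exI[of _ \<delta>], rule exI[of _ q0], rule exI[of _ F])
    using C1 C2 C3 C4 C5 by (intro conjI) assumption+
qed


lemma QS_op_sub:
  assumes "\<And>w. quotient_lang M w = f (quotient_lang K w) (quotient_lang L w)"
  shows "QS \<Sigma> M \<subseteq> (\<lambda>(A,B). f A B) ` (QS \<Sigma> K \<times> QS \<Sigma> L)"
proof
  fix X assume "X \<in> QS \<Sigma> M"
  then obtain w where w: "w \<in> lists \<Sigma>" "X = quotient_lang M w" by blast
  have "(quotient_lang K w, quotient_lang L w) \<in> QS \<Sigma> K \<times> QS \<Sigma> L" using w by blast
  moreover have "X = (\<lambda>(A,B). f A B) (quotient_lang K w, quotient_lang L w)" using w assms by simp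
  ultimately show "X \<in> (\<lambda>(A,B). f A B) ` (QS \<Sigma> K \<times> QS \<Sigma> L)" by (rule rev_image_eqI)
qed

lemma kappa_le_prod:
  assumes "\<And>w. quotient_lang M w = f (quotient_lang K w) (quotient_lang L w)"
    and "kappa \<Sigma> K \<ge> 1" "kappa \<Sigma> L \<ge> 1"
  shows "kappa \<Sigma> M \<le> kappa \<Sigma> K * kappa \<Sigma> L"
proof -
  have fK: "finite (QS \<Sigma> K)" and fL: "finite (QS \<Sigma> L)"
    using assms(2,3) unfolding kappa_def by (auto intro: card_ge_0_finite)
  have "kappa \<Sigma> M \<le> card ((\<lambda>(A,B). f A B) ` (QS \<Sigma> K \<times> QS \<Sigma> L))"
    unfolding kappa_def by (rule card_mono) (use fK fL QS_op_sub[where M=M and f=f and K=K and L=L and \<Sigma>=\<Sigma>, OF assms(1)] in auto)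
  also have "\<dots> \<le> card (QS \<Sigma> K \<times> QS \<Sigma> L)" by (rule card_image_le) (use fK fL in auto)
  finally show ?thesis unfolding kappa_def card_cartesian_product by simp
qed

lemma kappa_le_inter:
  assumes "\<And>w. quotient_lang M w = f (quotient_lang K w) (quotient_lang L w)"
    and "kappa \<Sigma> K \<ge> 1" "kappa \<Sigma> L \<ge> 1"
    and "{} \<in> QS \<Sigma> K" "{} \<in> QS \<Sigma> L" "\<And>B. f {} B = {}" "\<And>A. f A {} = {}"
  shows "kappa \<Sigma> M \<le> (kappa \<Sigma> K - 1) * (kappa \<Sigma> L - 1) + 1"
proof -
  have fK: "finite (QS \<Sigma> K)" and fL: "finite (QS \<Sigma> L)"
    using assms(2,3) unfolding kappa_def by (auto intro: card_ge_0_finite)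
  let ?A = "QS \<Sigma> K - {{}}" and ?B = "QS \<Sigma> L - {{}}"
  have "QS \<Sigma> M \<subseteq> insert {} ((\<lambda>(A,B). f A B) ` (?A \<times> ?B))"
  proof
    fix X assume "X \<in> QS \<Sigma> M"
    then obtain w where w: "w \<in> lists \<Sigma>" "X = quotient_lang M w" by blast
    show "X \<in> insert {} ((\<lambda>(A,B). f A B) ` (?A \<times> ?B))"
    proof (cases "quotient_lang K w = {} \<or> quotient_lang L w = {}")
      case True then have "X = {}" using assms(1) assms(6,7) w by auto
      then show ?thesis by simp
    next
      case False
      then have "(quotient_lang K w, quotient_lang L w) \<in> ?A \<times> ?B" using w by blast
      moreover have "X = (\<lambda>(A,B). f A B) (quotient_lang K w, quotient_lang L w)" using w assms(1) by simp
      ultimately show ?thesis by (blast intro: rev_image_eqI)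
    qed
  qed
  then have "kappa \<Sigma> M \<le> card (insert {} ((\<lambda>(A,B). f A B) ` (?A \<times> ?B)))"
    unfolding kappa_def by (rule card_mono[rotated]) (use fK fL in auto)
  also have "\<dots> \<le> card ((\<lambda>(A,B). f A B) ` (?A \<times> ?B)) + 1"
    using fK fL by (simp add: card_insert_if)
  also have "card ((\<lambda>(A,B). f A B) ` (?A \<times> ?B)) \<le> card (?A \<times> ?B)"
    by (rule card_image_le) (use fK fL in auto)
  also have "card (?A \<times> ?B) = (kappa \<Sigma> K - 1) * (kappa \<Sigma> L - 1)"
    unfolding card_cartesian_product kappa_def using assms(4,5) fK fL by simp
  finally show ?thesis by simp
qed

lemma kappa_le_diff:
  assumes "\<And>w. quotient_lang M w = f (quotient_lang K w) (quotient_lang L w)"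
    and "kappa \<Sigma> K \<ge> 1" "kappa \<Sigma> L \<ge> 1"
    and "{} \<in> QS \<Sigma> K" "\<And>B. f {} B = {}"
  shows "kappa \<Sigma> M \<le> (kappa \<Sigma> K - 1) * kappa \<Sigma> L + 1"
proof -
  have fK: "finite (QS \<Sigma> K)" and fL: "finite (QS \<Sigma> L)"
    using assms(2,3) unfolding kappa_def by (auto intro: card_ge_0_finite)
  let ?A = "QS \<Sigma> K - {{}}" and ?B = "QS \<Sigma> L"
  have "QS \<Sigma> M \<subseteq> insert {} ((\<lambda>(A,B). f A B) ` (?A \<times> ?B))"
  proof
    fix X assume "X \<in> QS \<Sigma> M"
    then obtain w where w: "w \<in> lists \<Sigma>" "X = quotient_lang M w" by blast
    show "X \<in> insert {} ((\<lambda>(A,B). f A B) ` (?A \<times> ?B))"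
    proof (cases "quotient_lang K w = {}")
      case True then have "X = {}" using assms(1) assms(5) w by auto
      then show ?thesis by simp
    next
      case False
      then have "(quotient_lang K w, quotient_lang L w) \<in> ?A \<times> ?B" using w by blast
      moreover have "X = (\<lambda>(A,B). f A B) (quotient_lang K w, quotient_lang L w)" using w assms(1) by simp
      ultimately show ?thesis by (blast intro: rev_image_eqI)
    qed
  qed
  then have "kappa \<Sigma> M \<le> card (insert {} ((\<lambda>(A,B). f A B) ` (?A \<times> ?B)))"
    unfolding kappa_def by (rule card_mono[rotated]) (use fK fL in auto)
  also have "\<dots> \<le> card ((\<lambda>(A,B). f A B) ` (?A \<times> ?B)) + 1"
    using fK fL by (simp add: card_insert_if)
  also have "card ((\<lambda>(A,B). f A B) ` (?A \<times> ?B)) \<le> card (?A \<times> ?B)"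
    by (rule card_image_le) (use fK fL in auto)
  also have "card (?A \<times> ?B) = (kappa \<Sigma> K - 1) * kappa \<Sigma> L"
    unfolding card_cartesian_product kappa_def using assms(4) fK fL by simp
  finally show ?thesis by simp
qed

lemma empty_quot:
  assumes "prefix_closed K" "K \<subseteq> lists \<Sigma>" "kappa \<Sigma> K \<ge> 2"
  shows "{} \<in> QS \<Sigma> K"
proof (cases "lists \<Sigma> \<subseteq> K")
  case True
  then have "K = lists \<Sigma>" using assms(2) by blast
  then have "QS \<Sigma> K = {lists \<Sigma>}" by (auto simp: quotient_lang_def)
  then show ?thesis using assms(3) unfolding kappa_def by simp
next
  case False
  then obtain w where w: "w \<in> lists \<Sigma>" "w \<notin> K" by blast
  have "quotient_lang K w = {}"
    using w assms(1) unfolding quotient_lang_def prefix_closed_def by auto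
  then show ?thesis using w by blast
qed

lemma subword_factor: "subword_closed K \<Longrightarrow> factor_closed K"
  unfolding subword_closed_def factor_closed_def by blast
lemma factor_prefix: "factor_closed K \<Longrightarrow> prefix_closed K"
  unfolding prefix_closed_def factor_closed_def by blast
lemma subword_suffix: "subword_closed K \<Longrightarrow> suffix_closed K"
  unfolding subword_closed_def suffix_closed_def by (meson sublist_imp_subseq suffix_imp_sublist)

lemma quot_un: "quotient_lang (K \<union> L) w = quotient_lang K w \<union> quotient_lang L w"
  and quot_int: "quotient_lang (K \<inter> L) w = quotient_lang K w \<inter> quotient_lang L w"
  and quot_diff: "quotient_lang (K - L) w = quotient_lang K w - quotient_lang L w"
  and quot_sd: "quotient_lang (symdiff K L) w = symdiff (quotient_lang K w) (quotient_lang L w)"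
  by (auto simp: quotient_lang_def symdiff_def)

lemma arith1: "2 \<le> (m::nat) \<Longrightarrow> 2 \<le> n \<Longrightarrow> (m - 1) * (n - 1) + 1 = m * n - (m + n - 2)"
proof -
  assume "2 \<le> m" "2 \<le> n"
  then obtain a b where "m = a + 2" "n = b + 2" by (metis add.commute le_add_diff_inverse)
  then show ?thesis by (simp add: algebra_simps)
qed
lemma arith2: "2 \<le> (m::nat) \<Longrightarrow> 2 \<le> n \<Longrightarrow> (m - 1) * n + 1 = m * n - (n - 1)"
proof -
  assume "2 \<le> m" "2 \<le> n"
  then obtain a b where "m = a + 2" "n = b + 2" by (metis add.commute le_add_diff_inverse)
  then show ?thesis by (simp add: algebra_simps)
qed

lemma upper_prefix:
  assumes "regular \<Sigma> K" "regular \<Sigma> L" "kappa \<Sigma> K = m" "kappa \<Sigma> L = n" "2 \<le> m" "2 \<le> n"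
    "prefix_closed K" "prefix_closed L"
  shows "kappa \<Sigma> (K \<inter> L) \<le> m * n - (m + n - 2) \<and>
       kappa \<Sigma> (K \<union> L) \<le> m * n \<and>
       kappa \<Sigma> (symdiff K L) \<le> m * n \<and>
       kappa \<Sigma> (K - L) \<le> m * n - (n - 1)"
proof -
  have sK: "K \<subseteq> lists \<Sigma>" and sL: "L \<subseteq> lists \<Sigma>" using assms(1,2) unfolding regular_def by auto
  have eK: "{} \<in> QS \<Sigma> K" using empty_quot[OF assms(7) sK] assms by simp
  have eL: "{} \<in> QS \<Sigma> L" using empty_quot[OF assms(8) sL] assms by simp
  have g: "kappa \<Sigma> K \<ge> 1" "kappa \<Sigma> L \<ge> 1" using assms by auto
  have 1: "kappa \<Sigma> (K \<inter> L) \<le> (m - 1) * (n - 1) + 1"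
    using kappa_le_inter[where f="(\<inter>)", OF quot_int g eK eL] assms by simp
  have 2: "kappa \<Sigma> (K - L) \<le> (m - 1) * n + 1"
    using kappa_le_diff[where f="(-)", OF quot_diff g eK] assms by simp
  have 3: "kappa \<Sigma> (K \<union> L) \<le> m * n"
    using kappa_le_prod[where f="(\<union>)", OF quot_un g] assms by simp
  have 4: "kappa \<Sigma> (symdiff K L) \<le> m * n"
    using kappa_le_prod[where f="symdiff", OF quot_sd g] assms by simp
  show ?thesis using 1 2 3 4 arith1[OF assms(5,6)] arith2[OF assms(5,6)] by simp
qed

lemma upper_suffix:
  assumes "kappa \<Sigma> K = m" "kappa \<Sigma> L = n" "2 \<le> m" "2 \<le> n"
  shows "kappa \<Sigma> (K \<union> L) \<le> m * n \<and>
       kappa \<Sigma> (K \<inter> L) \<le> m * n \<and>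
       kappa \<Sigma> (K - L) \<le> m * n \<and>
       kappa \<Sigma> (symdiff K L) \<le> m * n"
proof -
  have g: "kappa \<Sigma> K \<ge> 1" "kappa \<Sigma> L \<ge> 1" using assms by auto
  show ?thesis
    using kappa_le_prod[where f="(\<union>)", OF quot_un g] kappa_le_prod[where f="(\<inter>)", OF quot_int g]
      kappa_le_prod[where f="(-)", OF quot_diff g] kappa_le_prod[where f="symdiff", OF quot_sd g] assms
    by simp
qed

lemma kappa_index:
  assumes "\<And>w. w \<in> lists \<Sigma> \<Longrightarrow> st w \<in> I \<and> quotient_lang M w = sem (st w)"
    "\<And>i. i \<in> I \<Longrightarrow> \<exists>w\<in>lists \<Sigma>. st w = i"
  shows "kappa \<Sigma> M = card (sem ` I)"
proof -
  have "QS \<Sigma> M = sem ` I"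
  proof
    show "QS \<Sigma> M \<subseteq> sem ` I" using assms(1) by force
    show "sem ` I \<subseteq> QS \<Sigma> M"
    proof
      fix X assume "X \<in> sem ` I"
      then obtain i where i: "i \<in> I" "X = sem i" by blast
      then obtain w where "w \<in> lists \<Sigma>" "st w = i" using assms(2) by blast
      then show "X \<in> QS \<Sigma> M" using assms(1) i by force
    qed
  qed
  then show ?thesis unfolding kappa_def by simp
qed

definition cnt :: "'a \<Rightarrow> 'a list \<Rightarrow> nat" where
  "cnt a w = length (filter (\<lambda>x. x = a) w)"

lemma cnt_simps[simp]: "cnt a [] = 0" "cnt a (xs @ ys) = cnt a xs + cnt a ys"
  "cnt a (x # xs) = (if x = a then Suc (cnt a xs) else cnt a xs)"
  "cnt a (replicate p b) = (if b = a then p else 0)"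
  by (auto simp: cnt_def)

definition CK :: "'a set \<Rightarrow> 'a \<Rightarrow> nat \<Rightarrow> 'a list set" where
  "CK \<Sigma> a m = {w \<in> lists \<Sigma>. cnt a w + 2 \<le> m}"
definition CS :: "'a set \<Rightarrow> 'a \<Rightarrow> nat \<Rightarrow> nat \<Rightarrow> 'a list set" where
  "CS \<Sigma> a m i = {x \<in> lists \<Sigma>. i + cnt a x + 2 \<le> m}"

lemma quot_CK: "w \<in> lists \<Sigma> \<Longrightarrow> quotient_lang (CK \<Sigma> a m) w = CS \<Sigma> a m (min (cnt a w) (m - 1))"
  by (auto simp: quotient_lang_def CK_def CS_def)

lemma CK_sub: "CK \<Sigma> a m \<subseteq> lists \<Sigma>" by (auto simp: CK_def)

lemma subseq_cnt: "subseq u w \<Longrightarrow> cnt a u \<le> cnt a w"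
  unfolding cnt_def by (rule list_emb_length, rule subseq_filter)

lemma subseq_set: "subseq u w \<Longrightarrow> set u \<subseteq> set w"
  by (induct rule: list_emb.induct) auto

lemma CK_subword: "subword_closed (CK \<Sigma> a m)"
  unfolding subword_closed_def
proof (intro ballI allI impI)
  fix w u assume w: "w \<in> CK \<Sigma> a m" and u: "subseq u w"
  have "set u \<subseteq> set w" using subseq_set[OF u] .
  moreover have "set w \<subseteq> \<Sigma>" using w by (auto simp: CK_def)
  ultimately have "u \<in> lists \<Sigma>" by auto
  moreover have "cnt a u \<le> cnt a w" using subseq_cnt[OF u] .
  ultimately show "u \<in> CK \<Sigma> a m" using w by (auto simp: CK_def)
qed

lemma CS_rep: "a \<in> \<Sigma> \<Longrightarrow> replicate k a \<in> CS \<Sigma> a m i \<longleftrightarrow> i + k + 2 \<le> m"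
  by (auto simp: CS_def)

lemma CS_fin: "finite (CS \<Sigma> a m ` {..<m})" by simp

lemma kappa_CK:
  assumes "a \<in> \<Sigma>" "2 \<le> m"
  shows "kappa \<Sigma> (CK \<Sigma> a m) = m"
proof -
  have "kappa \<Sigma> (CK \<Sigma> a m) = card (CS \<Sigma> a m ` {..<m})"
  proof (rule kappa_index[where st="\<lambda>w. min (cnt a w) (m - 1)"])
    fix w :: "'a list" assume "w \<in> lists \<Sigma>"
    then show "min (cnt a w) (m - 1) \<in> {..<m} \<and> quotient_lang (CK \<Sigma> a m) w = CS \<Sigma> a m (min (cnt a w) (m - 1))"
      using quot_CK[of w \<Sigma> a m] assms by auto
  next
    fix i assume "i \<in> {..<m}"
    then show "\<exists>w\<in>lists \<Sigma>. min (cnt a w) (m - 1) = i"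
      using assms by (intro bexI[of _ "replicate i a"]) auto
  qed
  also have "\<dots> = m"
  proof -
    have "inj_on (CS \<Sigma> a m) {..<m}"
    proof (rule inj_onI)
      fix i i' assume i: "i \<in> {..<m}" "i' \<in> {..<m}" and e: "CS \<Sigma> a m i = CS \<Sigma> a m i'"
      have "replicate (m - 2 - i) a \<in> CS \<Sigma> a m i \<longleftrightarrow> replicate (m - 2 - i) a \<in> CS \<Sigma> a m i'"
        "replicate (m - 2 - i') a \<in> CS \<Sigma> a m i \<longleftrightarrow> replicate (m - 2 - i') a \<in> CS \<Sigma> a m i'"
        using e by auto
      then show "i = i'" using i assms(2) unfolding CS_rep[OF assms(1)] by (simp; arith)
    qed
    then show ?thesis by (simp add: card_image)
  qed
  finally show ?thesis .
qed

lemma kappa_fin: "kappa \<Sigma> M \<ge> 1 \<Longrightarrow> finite (QS \<Sigma> M)"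
  unfolding kappa_def by (rule card_ge_0_finite) simp

lemma regular_CK: "a \<in> \<Sigma> \<Longrightarrow> 2 \<le> m \<Longrightarrow> regular \<Sigma> (CK \<Sigma> a m)"
  by (rule regularI[OF CK_sub], rule kappa_fin) (simp add: kappa_CK)

lemma thrA:
  fixes i i' m :: nat
  assumes "i < m" "i' < m"
    "i + (m - 2 - i) + 2 \<le> m \<longleftrightarrow> i' + (m - 2 - i) + 2 \<le> m"
    "i + (m - 2 - i') + 2 \<le> m \<longleftrightarrow> i' + (m - 2 - i') + 2 \<le> m"
  shows "i = i'"
proof (rule ccontr)
  assume "i \<noteq> i'"
  then consider "i < i'" | "i' < i" by linarith
  then show False
  proof cases
    case 1
    then have "i + (m - 2 - i) + 2 \<le> m" "\<not> i' + (m - 2 - i) + 2 \<le> m" using assms(2) by linarith+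
    then show False using assms(3) by blast
  next
    case 2
    then have "i' + (m - 2 - i') + 2 \<le> m" "\<not> i + (m - 2 - i') + 2 \<le> m" using assms(1) by linarith+
    then show False using assms(4) by blast
  qed
qed
lemma thrB:
  fixes j j' n :: nat
  assumes "j < n" "j' < n"
    "j + (n - 1 - j) + 2 \<le> n \<longleftrightarrow> j' + (n - 1 - j) + 2 \<le> n"
    "j + (n - 1 - j') + 2 \<le> n \<longleftrightarrow> j' + (n - 1 - j') + 2 \<le> n"
  shows "j = j'"
proof (rule ccontr)
  assume "j \<noteq> j'"
  then consider "j < j'" | "j' < j" by linarith
  then show False
  proof cases
    case 1
    then have "j + (n - 1 - j') + 2 \<le> n" "\<not> j' + (n - 1 - j') + 2 \<le> n" using assms(1,2) by linarith+
    then show False using assms(4) by blast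
  next
    case 2
    then have "\<not> j + (n - 1 - j) + 2 \<le> n" "j' + (n - 1 - j) + 2 \<le> n" using assms(1,2) by linarith+
    then show False using assms(3) by blast
  qed
qed

lemma image_split:
  assumes "J \<subseteq> I" "\<And>x. x \<in> I \<Longrightarrow> x \<notin> J \<Longrightarrow> G x = {}" "x0 \<in> I" "G x0 = {}"
  shows "G ` I = insert {} (G ` J)"
proof (rule set_eqI)
  fix X
  show "X \<in> G ` I \<longleftrightarrow> X \<in> insert {} (G ` J)"
  proof
    assume "X \<in> G ` I"
    then obtain x where x: "x \<in> I" "X = G x" by (rule imageE)
    show "X \<in> insert {} (G ` J)"
    proof (cases "x \<in> J")
      case True
      have "G x \<in> G ` J" using True by (rule imageI)
      then show ?thesis unfolding x(2) by (rule insertI2)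
    next
      case False
      have "G x = {}" using assms(2)[OF x(1) False] .
      then show ?thesis unfolding x(2) by simp
    qed
  next
    assume "X \<in> insert {} (G ` J)"
    then consider "X = {}" | "X \<in> G ` J" by (rule insertE)
    then show "X \<in> G ` I"
    proof cases
      case 1 then have "X = G x0" using assms(4) by simp
      then show ?thesis using assms(3) by (rule image_eqI)
    next
      case 2 then show ?thesis using image_mono[OF assms(1)] by (rule subsetD[rotated])
    qed
  qed
qed

lemma card_insert_empty:
  assumes "G ` I = insert {} (G ` J)" "{} \<notin> G ` J" "inj_on G J" "finite J"
  shows "card (G ` I) = card J + 1"
proof -
  have f: "finite (G ` J)" using assms(4) by (rule finite_imageI)
  have "card (G ` I) = card (insert {} (G ` J))" by (simp only: assms(1))
  also have "\<dots> = Suc (card (G ` J))" using f assms(2) by (rule card_insert_disjoint)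
  also have "card (G ` J) = card J" using assms(3) by (rule card_image)
  finally show ?thesis by simp
qed

context
  fixes \<Sigma> :: "'a set" and a b :: 'a and m n :: nat
  assumes a: "a \<in> \<Sigma>" and b: "b \<in> \<Sigma>" and ab: "a \<noteq> b" and m: "2 \<le> m" and n: "2 \<le> n"
begin

lemma W_a: "replicate p a @ replicate q b \<in> CS \<Sigma> a m i \<longleftrightarrow> i + p + 2 \<le> m"
  using a b ab by (auto simp: CS_def)
lemma W_b: "replicate p a @ replicate q b \<in> CS \<Sigma> b n j \<longleftrightarrow> j + q + 2 \<le> n"
  using a b ab by (auto simp: CS_def)

lemma kappa_pair:
  assumes qM: "\<And>w. quotient_lang M w = f (quotient_lang (CK \<Sigma> a m) w) (quotient_lang (CK \<Sigma> b n) w)"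
  shows "kappa \<Sigma> M = card ((\<lambda>(i,j). f (CS \<Sigma> a m i) (CS \<Sigma> b n j)) ` ({..<m} \<times> {..<n}))"
proof (rule kappa_index[where st="\<lambda>w. (min (cnt a w) (m - 1), min (cnt b w) (n - 1))"])
  fix w :: "'a list" assume w: "w \<in> lists \<Sigma>"
  show "(min (cnt a w) (m - 1), min (cnt b w) (n - 1)) \<in> {..<m} \<times> {..<n} \<and>
        quotient_lang M w = (\<lambda>(i,j). f (CS \<Sigma> a m i) (CS \<Sigma> b n j)) (min (cnt a w) (m - 1), min (cnt b w) (n - 1))"
    using m n qM[of w] quot_CK[OF w, of a m] quot_CK[OF w, of b n] by auto
next
  fix ij assume "ij \<in> {..<m} \<times> {..<n}"
  then obtain i j where ij: "ij = (i, j)" "i < m" "j < n" by blast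
  have "replicate i a @ replicate j b \<in> lists \<Sigma>" using a b by auto
  moreover have "(min (cnt a (replicate i a @ replicate j b)) (m - 1), min (cnt b (replicate i a @ replicate j b)) (n - 1)) = ij"
    using ij ab by auto
  ultimately show "\<exists>w\<in>lists \<Sigma>. (min (cnt a w) (m - 1), min (cnt b w) (n - 1)) = ij" by blast
qed

lemma sub_un: "kappa \<Sigma> (CK \<Sigma> a m \<union> CK \<Sigma> b n) = m * n"
proof -
  let ?G = "\<lambda>(i,j). CS \<Sigma> a m i \<union> CS \<Sigma> b n j"
  have "inj_on ?G ({..<m} \<times> {..<n})"
  proof (rule inj_onI)
    fix x y assume xI: "x \<in> ({..<m} \<times> {..<n})" and yI: "y \<in> ({..<m} \<times> {..<n})" and e0: "?G x = ?G y"
    obtain i j i' j' where xy: "x = (i, j)" "y = (i', j')" by (cases x, cases y)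
    have i: "i < m" "j < n" "i' < m" "j' < n" using xI yI xy by auto
    have e: "?G (i, j) = ?G (i', j')" using e0 xy by simp
    have h: "\<And>p q. replicate p a @ replicate q b \<in> ?G (i, j) \<longleftrightarrow> replicate p a @ replicate q b \<in> ?G (i', j')"
      using e by simp
    have "i + (m - 2 - i) + 2 \<le> m \<longleftrightarrow> i' + (m - 2 - i) + 2 \<le> m"
      using h[of "m - 2 - i" n] unfolding Un_iff split W_a W_b by simp
    moreover have "i + (m - 2 - i') + 2 \<le> m \<longleftrightarrow> i' + (m - 2 - i') + 2 \<le> m"
      using h[of "m - 2 - i'" n] unfolding Un_iff split W_a W_b by simp
    moreover have "j + (n - 2 - j) + 2 \<le> n \<longleftrightarrow> j' + (n - 2 - j) + 2 \<le> n"
      using h[of m "n - 2 - j"] unfolding Un_iff split W_a W_b by simp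
    moreover have "j + (n - 2 - j') + 2 \<le> n \<longleftrightarrow> j' + (n - 2 - j') + 2 \<le> n"
      using h[of m "n - 2 - j'"] unfolding Un_iff split W_a W_b by simp
    ultimately have "i = i' \<and> j = j'" using i thrA[of i m i'] thrA[of j n j'] thrB[of j n j'] by blast
    then show "x = y" using xy by simp
  qed
  then show ?thesis using kappa_pair[where f="(\<union>)", OF quot_un] by (simp add: card_image card_cartesian_product)
qed

lemma sub_sd: "kappa \<Sigma> (symdiff (CK \<Sigma> a m) (CK \<Sigma> b n)) = m * n"
proof -
  let ?G = "\<lambda>(i,j). symdiff (CS \<Sigma> a m i) (CS \<Sigma> b n j)"
  have sd: "\<And>x X Y. x \<in> symdiff X Y \<longleftrightarrow> (x \<in> X) \<noteq> (x \<in> Y)" by (auto simp: symdiff_def)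
  have "inj_on ?G ({..<m} \<times> {..<n})"
  proof (rule inj_onI)
    fix x y assume xI: "x \<in> ({..<m} \<times> {..<n})" and yI: "y \<in> ({..<m} \<times> {..<n})" and e0: "?G x = ?G y"
    obtain i j i' j' where xy: "x = (i, j)" "y = (i', j')" by (cases x, cases y)
    have i: "i < m" "j < n" "i' < m" "j' < n" using xI yI xy by auto
    have e: "?G (i, j) = ?G (i', j')" using e0 xy by simp
    have h: "\<And>p q. replicate p a @ replicate q b \<in> ?G (i, j) \<longleftrightarrow> replicate p a @ replicate q b \<in> ?G (i', j')"
      using e by simp
    have "i + (m - 2 - i) + 2 \<le> m \<longleftrightarrow> i' + (m - 2 - i) + 2 \<le> m"
      using h[of "m - 2 - i" n] unfolding sd split W_a W_b by simp
    moreover have "i + (m - 2 - i') + 2 \<le> m \<longleftrightarrow> i' + (m - 2 - i') + 2 \<le> m"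
      using h[of "m - 2 - i'" n] unfolding sd split W_a W_b by simp
    moreover have "j + (n - 2 - j) + 2 \<le> n \<longleftrightarrow> j' + (n - 2 - j) + 2 \<le> n"
      using h[of m "n - 2 - j"] unfolding sd split W_a W_b by simp
    moreover have "j + (n - 2 - j') + 2 \<le> n \<longleftrightarrow> j' + (n - 2 - j') + 2 \<le> n"
      using h[of m "n - 2 - j'"] unfolding sd split W_a W_b by simp
    ultimately have "i = i' \<and> j = j'" using i thrA[of i m i'] thrA[of j n j'] thrB[of j n j'] by blast
    then show "x = y" using xy by simp
  qed
  then show ?thesis using kappa_pair[where f="symdiff", OF quot_sd] by (simp add: card_image card_cartesian_product)
qed

lemma CS_top: "CS \<Sigma> c k (k - 1) = {}" if "1 \<le> k" for c k
  using that by (auto simp: CS_def)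

lemma sub_int: "kappa \<Sigma> (CK \<Sigma> a m \<inter> CK \<Sigma> b n) = m * n - (m + n - 2)"
proof -
  let ?G = "\<lambda>(i,j). CS \<Sigma> a m i \<inter> CS \<Sigma> b n j"
  let ?J = "{..<m - 1} \<times> {..<n - 1}"
  have sp: "?G ` ({..<m} \<times> {..<n}) = insert {} (?G ` ?J)"
  proof (rule image_split)
    show "?J \<subseteq> {..<m} \<times> {..<n}" by auto
    show "(m - 1, 0) \<in> {..<m} \<times> {..<n}" using m n by auto
    show "?G (m - 1, 0) = {}" using CS_top[of m a] m by simp
    fix x assume "x \<in> {..<m} \<times> {..<n}" "x \<notin> ?J"
    then obtain i j where x: "x = (i, j)" "i < m" "j < n" "\<not> (i < m - 1 \<and> j < n - 1)" by (cases x) auto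
    then have "i = m - 1 \<or> j = n - 1" by arith
    then show "?G x = {}" using x CS_top[of m a] CS_top[of n b] m n by auto
  qed
  have ne: "{} \<notin> ?G ` ?J"
  proof
    assume "{} \<in> ?G ` ?J"
    then obtain i j where ij: "i < m - 1" "j < n - 1" "?G (i, j) = {}" by auto
    have "replicate 0 a @ replicate 0 b \<in> ?G (i, j)" unfolding split Int_iff W_a W_b using ij(1,2) by arith
    then show False by (simp only: ij(3) empty_iff)
  qed
  have "inj_on ?G ?J"
  proof (rule inj_onI)
    fix x y assume xI: "x \<in> ?J" and yI: "y \<in> ?J" and e0: "?G x = ?G y"
    obtain i j i' j' where xy: "x = (i, j)" "y = (i', j')" by (cases x, cases y)
    have i: "i < m - 1" "j < n - 1" "i' < m - 1" "j' < n - 1" using xI yI xy by auto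
    have e: "?G (i, j) = ?G (i', j')" using e0 xy by simp
    have h: "\<And>p q. replicate p a @ replicate q b \<in> ?G (i, j) \<longleftrightarrow> replicate p a @ replicate q b \<in> ?G (i', j')"
      using e by simp
    have jt: "j + 0 + 2 \<le> n" "j' + 0 + 2 \<le> n" "i + 0 + 2 \<le> m" "i' + 0 + 2 \<le> m" using i by arith+
    have "i + (m - 2 - i) + 2 \<le> m \<longleftrightarrow> i' + (m - 2 - i) + 2 \<le> m"
      using h[of "m - 2 - i" 0] jt unfolding Int_iff split W_a W_b by simp
    moreover have "i + (m - 2 - i') + 2 \<le> m \<longleftrightarrow> i' + (m - 2 - i') + 2 \<le> m"
      using h[of "m - 2 - i'" 0] jt unfolding Int_iff split W_a W_b by simp
    moreover have "j + (n - 2 - j) + 2 \<le> n \<longleftrightarrow> j' + (n - 2 - j) + 2 \<le> n"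
      using h[of 0 "n - 2 - j"] jt unfolding Int_iff split W_a W_b by simp
    moreover have "j + (n - 2 - j') + 2 \<le> n \<longleftrightarrow> j' + (n - 2 - j') + 2 \<le> n"
      using h[of 0 "n - 2 - j'"] jt unfolding Int_iff split W_a W_b by simp
    moreover have "i < m" "i' < m" "j < n" "j' < n" using i by arith+
    ultimately have "i = i' \<and> j = j'" using i thrA[of i m i'] thrA[of j n j'] thrB[of j n j'] by blast
    then show "x = y" using xy by simp
  qed
  then have "card (?G ` ({..<m} \<times> {..<n})) = (m - 1) * (n - 1) + 1"
    using card_insert_empty[OF sp ne] by (simp add: card_cartesian_product)
  then show ?thesis using kappa_pair[where f="(\<inter>)", OF quot_int] arith1[OF m n] by simp
qed

lemma sub_diff: "kappa \<Sigma> (CK \<Sigma> a m - CK \<Sigma> b n) = m * n - (n - 1)"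
proof -
  let ?G = "\<lambda>(i,j). CS \<Sigma> a m i - CS \<Sigma> b n j"
  let ?J = "{..<m - 1} \<times> {..<n}"
  have sp: "?G ` ({..<m} \<times> {..<n}) = insert {} (?G ` ?J)"
  proof (rule image_split)
    show "?J \<subseteq> {..<m} \<times> {..<n}" by auto
    show "(m - 1, 0) \<in> {..<m} \<times> {..<n}" using m n by auto
    show "?G (m - 1, 0) = {}" using CS_top[of m a] m by simp
    fix x assume "x \<in> {..<m} \<times> {..<n}" "x \<notin> ?J"
    then obtain i j where x: "x = (i, j)" "i < m" "j < n" "\<not> i < m - 1" by (cases x) auto
    then have "i = m - 1" by arith
    then show "?G x = {}" using x CS_top[of m a] m by auto
  qed
  have ne: "{} \<notin> ?G ` ?J"
  proof
    assume "{} \<in> ?G ` ?J"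
    then obtain i j where ij: "i < m - 1" "j < n" "?G (i, j) = {}" by auto
    have "replicate 0 a @ replicate n b \<in> ?G (i, j)" unfolding split Diff_iff W_a W_b using ij(1,2) by arith
    then show False by (simp only: ij(3) empty_iff)
  qed
  have "inj_on ?G ?J"
  proof (rule inj_onI)
    fix x y assume xI: "x \<in> ?J" and yI: "y \<in> ?J" and e0: "?G x = ?G y"
    obtain i j i' j' where xy: "x = (i, j)" "y = (i', j')" by (cases x, cases y)
    have i: "i < m - 1" "j < n" "i' < m - 1" "j' < n" using xI yI xy by auto
    have e: "?G (i, j) = ?G (i', j')" using e0 xy by simp
    have h: "\<And>p q. replicate p a @ replicate q b \<in> ?G (i, j) \<longleftrightarrow> replicate p a @ replicate q b \<in> ?G (i', j')"
      using e by simp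
    have jt: "i + 0 + 2 \<le> m" "i' + 0 + 2 \<le> m" using i by arith+
    have "i + (m - 2 - i) + 2 \<le> m \<longleftrightarrow> i' + (m - 2 - i) + 2 \<le> m"
      using h[of "m - 2 - i" n] unfolding Diff_iff split W_a W_b by simp
    moreover have "i + (m - 2 - i') + 2 \<le> m \<longleftrightarrow> i' + (m - 2 - i') + 2 \<le> m"
      using h[of "m - 2 - i'" n] unfolding Diff_iff split W_a W_b by simp
    moreover have "j + (n - 1 - j) + 2 \<le> n \<longleftrightarrow> j' + (n - 1 - j) + 2 \<le> n"
      using h[of 0 "n - 1 - j"] jt unfolding Diff_iff split W_a W_b by simp
    moreover have "j + (n - 1 - j') + 2 \<le> n \<longleftrightarrow> j' + (n - 1 - j') + 2 \<le> n"
      using h[of 0 "n - 1 - j'"] jt unfolding Diff_iff split W_a W_b by simp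
    moreover have "i < m" "i' < m" "j < n" "j' < n" using i by arith+
    ultimately have "i = i' \<and> j = j'" using i thrA[of i m i'] thrA[of j n j'] thrB[of j n j'] by blast
    then show "x = y" using xy by simp
  qed
  then have "card (?G ` ({..<m} \<times> {..<n})) = (m - 1) * n + 1"
    using card_insert_empty[OF sp ne] by (simp add: card_cartesian_product)
  then show ?thesis using kappa_pair[where f="(-)", OF quot_diff] arith2[OF m n] by simp
qed

end

definition seg :: "'a \<Rightarrow> 'a list \<Rightarrow> 'a list" where
  "seg c w = rev (takeWhile (\<lambda>x. x \<noteq> c) (rev w))"

lemma seg_app: "seg c (xs @ ys) = (if c \<in> set ys then seg c ys else seg c xs @ ys)"
  unfolding seg_def by (auto simp: takeWhile_append)

lemma seg_noc: "c \<notin> set w \<Longrightarrow> seg c w = w"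
  unfolding seg_def by (subst takeWhile_eq_all_conv[THEN iffD2]) auto

lemma seg_nil: "seg c [] = []" by (simp add: seg_def)
lemma seg_single: "seg c [c] = []" by (simp add: seg_def)

definition DK :: "'a set \<Rightarrow> 'a \<Rightarrow> 'a \<Rightarrow> nat \<Rightarrow> 'a list set" where
  "DK \<Sigma> a c m = {w \<in> lists \<Sigma>. cnt a (seg c w) + 2 \<le> m}"
definition DS :: "'a set \<Rightarrow> 'a \<Rightarrow> 'a \<Rightarrow> nat \<Rightarrow> nat \<Rightarrow> 'a list set" where
  "DS \<Sigma> a c m i = {x \<in> lists \<Sigma>. (if c \<in> set x then cnt a (seg c x) else i + cnt a x) + 2 \<le> m}"

lemma DK_sub: "DK \<Sigma> a c m \<subseteq> lists \<Sigma>" by (auto simp: DK_def)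

lemma quot_DK:
  assumes w: "w \<in> lists \<Sigma>"
  shows "quotient_lang (DK \<Sigma> a c m) w = DS \<Sigma> a c m (min (cnt a (seg c w)) (m - 1))"
proof (rule set_eqI)
  fix x
  show "x \<in> quotient_lang (DK \<Sigma> a c m) w \<longleftrightarrow> x \<in> DS \<Sigma> a c m (min (cnt a (seg c w)) (m - 1))"
  proof (cases "c \<in> set x")
    case True
    then show ?thesis using w by (simp add: quotient_lang_def DK_def DS_def seg_app)
  next
    case False
    have "cnt a (seg c w) + cnt a x + 2 \<le> m \<longleftrightarrow> min (cnt a (seg c w)) (m - 1) + cnt a x + 2 \<le> m"
      by linarith
    then show ?thesis using w False by (simp add: quotient_lang_def DK_def DS_def seg_app add.assoc)
  qed
qed

lemma DK_suffix: "suffix_closed (DK \<Sigma> a c m)"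
  unfolding suffix_closed_def
proof (intro ballI allI impI)
  fix w u assume w: "w \<in> DK \<Sigma> a c m" and u: "suffix u w"
  then obtain v where v: "w = v @ u" by (auto simp: suffix_def)
  have "u \<in> lists \<Sigma>" using w v by (auto simp: DK_def)
  moreover have "cnt a (seg c u) \<le> cnt a (seg c w)"
  proof (cases "c \<in> set u")
    case True then show ?thesis using v by (simp add: seg_app)
  next
    case False then show ?thesis using v by (simp add: seg_app seg_noc)
  qed
  ultimately show "u \<in> DK \<Sigma> a c m" using w by (auto simp: DK_def)
qed

lemma DS_rep: "a \<in> \<Sigma> \<Longrightarrow> a \<noteq> c \<Longrightarrow> replicate k a \<in> DS \<Sigma> a c m i \<longleftrightarrow> i + k + 2 \<le> m"
  by (auto simp: DS_def)

lemma kappa_DK: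
  assumes "a \<in> \<Sigma>" "a \<noteq> c" "2 \<le> m"
  shows "kappa \<Sigma> (DK \<Sigma> a c m) = m"
proof -
  have "kappa \<Sigma> (DK \<Sigma> a c m) = card (DS \<Sigma> a c m ` {..<m})"
  proof (rule kappa_index[where st="\<lambda>w. min (cnt a (seg c w)) (m - 1)"])
    fix w :: "'a list" assume w: "w \<in> lists \<Sigma>"
    show "min (cnt a (seg c w)) (m - 1) \<in> {..<m} \<and> quotient_lang (DK \<Sigma> a c m) w = DS \<Sigma> a c m (min (cnt a (seg c w)) (m - 1))"
      using quot_DK[OF w, of a c m] assms by auto
  next
    fix i assume i: "i \<in> {..<m}"
    have "seg c (replicate i a) = replicate i a" using assms by (simp add: seg_noc)
    then have "min (cnt a (seg c (replicate i a))) (m - 1) = i" using i by auto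
    moreover have "replicate i a \<in> lists \<Sigma>" using assms by auto
    ultimately show "\<exists>w\<in>lists \<Sigma>. min (cnt a (seg c w)) (m - 1) = i" by blast
  qed
  also have "\<dots> = m"
  proof -
    have "inj_on (DS \<Sigma> a c m) {..<m}"
    proof (rule inj_onI)
      fix i i' assume i: "i \<in> {..<m}" "i' \<in> {..<m}" and e: "DS \<Sigma> a c m i = DS \<Sigma> a c m i'"
      have "i + (m - 2 - i) + 2 \<le> m \<longleftrightarrow> i' + (m - 2 - i) + 2 \<le> m"
        using e unfolding DS_rep[OF assms(1,2), symmetric] by simp
      moreover have "i + (m - 2 - i') + 2 \<le> m \<longleftrightarrow> i' + (m - 2 - i') + 2 \<le> m"
        using e unfolding DS_rep[OF assms(1,2), symmetric] by simp
      ultimately show "i = i'" using i thrA[of i m i'] by simp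
    qed
    then show ?thesis by (simp add: card_image)
  qed
  finally show ?thesis .
qed

lemma regular_DK: "a \<in> \<Sigma> \<Longrightarrow> a \<noteq> c \<Longrightarrow> 2 \<le> m \<Longrightarrow> regular \<Sigma> (DK \<Sigma> a c m)"
  by (rule regularI[OF DK_sub], rule kappa_fin) (simp add: kappa_DK)

context
  fixes \<Sigma> :: "'a set" and a b c d :: 'a and m n :: nat
  assumes a: "a \<in> \<Sigma>" and b: "b \<in> \<Sigma>" and c: "c \<in> \<Sigma>" and d: "d \<in> \<Sigma>"
    and dist: "a \<noteq> b" "a \<noteq> c" "a \<noteq> d" "b \<noteq> c" "b \<noteq> d" "c \<noteq> d"
    and m: "2 \<le> m" and n: "2 \<le> n"
begin

lemma SW_a: "replicate p a @ replicate q b \<in> DS \<Sigma> a c m i \<longleftrightarrow> i + p + 2 \<le> m"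
  using a b dist by (auto simp: DS_def)
lemma SW_b: "replicate p a @ replicate q b \<in> DS \<Sigma> b d n j \<longleftrightarrow> j + q + 2 \<le> n"
  using a b dist by (auto simp: DS_def)
lemma SV_a: "replicate p a @ [d] \<in> DS \<Sigma> a c m i \<longleftrightarrow> i + p + 2 \<le> m"
  using a d dist by (auto simp: DS_def)
lemma SV_b: "replicate p a @ [d] \<in> DS \<Sigma> b d n j"
proof -
  have "seg d (replicate p a @ [d]) = []" by (simp add: seg_app seg_single)
  then show ?thesis using a d n by (auto simp: DS_def)
qed
lemma SU_a: "c # replicate q b \<in> DS \<Sigma> a c m i"
proof -
  have "seg c ([c] @ replicate q b) = replicate q b" unfolding seg_app using dist by (simp add: seg_noc seg_single)
  then have "seg c (c # replicate q b) = replicate q b" by simp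
  then show ?thesis using b c m dist by (auto simp: DS_def)
qed
lemma SU_b: "c # replicate q b \<in> DS \<Sigma> b d n j \<longleftrightarrow> j + q + 2 \<le> n"
  using b c dist by (auto simp: DS_def)

lemma kappa_pair2:
  assumes qM: "\<And>w. quotient_lang M w = f (quotient_lang (DK \<Sigma> a c m) w) (quotient_lang (DK \<Sigma> b d n) w)"
    and inj: "inj_on (\<lambda>(i,j). f (DS \<Sigma> a c m i) (DS \<Sigma> b d n j)) ({..<m} \<times> {..<n})"
  shows "kappa \<Sigma> M = m * n"
proof -
  have "kappa \<Sigma> M = card ((\<lambda>(i,j). f (DS \<Sigma> a c m i) (DS \<Sigma> b d n j)) ` ({..<m} \<times> {..<n}))"
  proof (rule kappa_index[where st="\<lambda>w. (min (cnt a (seg c w)) (m - 1), min (cnt b (seg d w)) (n - 1))"])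
    fix w :: "'a list" assume w: "w \<in> lists \<Sigma>"
    show "(min (cnt a (seg c w)) (m - 1), min (cnt b (seg d w)) (n - 1)) \<in> {..<m} \<times> {..<n} \<and>
        quotient_lang M w = (\<lambda>(i,j). f (DS \<Sigma> a c m i) (DS \<Sigma> b d n j)) (min (cnt a (seg c w)) (m - 1), min (cnt b (seg d w)) (n - 1))"
      using m n qM[of w] quot_DK[OF w, of a c m] quot_DK[OF w, of b d n] by auto
  next
    fix ij assume "ij \<in> {..<m} \<times> {..<n}"
    then obtain i j where ij: "ij = (i, j)" "i < m" "j < n" by blast
    let ?w = "replicate i a @ replicate j b"
    have "?w \<in> lists \<Sigma>" using a b by auto
    moreover have "seg c ?w = ?w" "seg d ?w = ?w" using dist by (auto intro!: seg_noc)
    then have "(min (cnt a (seg c ?w)) (m - 1), min (cnt b (seg d ?w)) (n - 1)) = ij"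
      using ij dist by auto
    ultimately show "\<exists>w\<in>lists \<Sigma>. (min (cnt a (seg c w)) (m - 1), min (cnt b (seg d w)) (n - 1)) = ij" by blast
  qed
  then show ?thesis using inj by (simp add: card_image card_cartesian_product)
qed

lemma suf_un: "kappa \<Sigma> (DK \<Sigma> a c m \<union> DK \<Sigma> b d n) = m * n"
proof (rule kappa_pair2[where f="(\<union>)", OF quot_un])
  let ?G = "\<lambda>(i,j). DS \<Sigma> a c m i \<union> DS \<Sigma> b d n j"
  show "inj_on ?G ({..<m} \<times> {..<n})"
  proof (rule inj_onI)
    fix x y assume xI: "x \<in> {..<m} \<times> {..<n}" and yI: "y \<in> {..<m} \<times> {..<n}" and e0: "?G x = ?G y"
    obtain i j i' j' where xy: "x = (i, j)" "y = (i', j')" by (cases x, cases y)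
    have i: "i < m" "j < n" "i' < m" "j' < n" using xI yI xy by auto
    have e: "?G (i, j) = ?G (i', j')" using e0 xy by simp
    have h: "\<And>z. z \<in> ?G (i, j) \<longleftrightarrow> z \<in> ?G (i', j')" using e by simp
    have "i + (m - 2 - i) + 2 \<le> m \<longleftrightarrow> i' + (m - 2 - i) + 2 \<le> m"
      using h[of "replicate (m - 2 - i) a @ replicate n b"] unfolding Un_iff split SW_a SW_b by simp
    moreover have "i + (m - 2 - i') + 2 \<le> m \<longleftrightarrow> i' + (m - 2 - i') + 2 \<le> m"
      using h[of "replicate (m - 2 - i') a @ replicate n b"] unfolding Un_iff split SW_a SW_b by simp
    moreover have "j + (n - 2 - j) + 2 \<le> n \<longleftrightarrow> j' + (n - 2 - j) + 2 \<le> n"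
      using h[of "replicate m a @ replicate (n - 2 - j) b"] unfolding Un_iff split SW_a SW_b by simp
    moreover have "j + (n - 2 - j') + 2 \<le> n \<longleftrightarrow> j' + (n - 2 - j') + 2 \<le> n"
      using h[of "replicate m a @ replicate (n - 2 - j') b"] unfolding Un_iff split SW_a SW_b by simp
    ultimately have "i = i' \<and> j = j'" using i thrA[of i m i'] thrA[of j n j'] by blast
    then show "x = y" using xy by simp
  qed
qed

lemma suf_sd: "kappa \<Sigma> (symdiff (DK \<Sigma> a c m) (DK \<Sigma> b d n)) = m * n"
proof (rule kappa_pair2[where f="symdiff", OF quot_sd])
  let ?G = "\<lambda>(i,j). symdiff (DS \<Sigma> a c m i) (DS \<Sigma> b d n j)"
  have sd: "\<And>x X Y. x \<in> symdiff X Y \<longleftrightarrow> (x \<in> X) \<noteq> (x \<in> Y)" by (auto simp: symdiff_def)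
  show "inj_on ?G ({..<m} \<times> {..<n})"
  proof (rule inj_onI)
    fix x y assume xI: "x \<in> {..<m} \<times> {..<n}" and yI: "y \<in> {..<m} \<times> {..<n}" and e0: "?G x = ?G y"
    obtain i j i' j' where xy: "x = (i, j)" "y = (i', j')" by (cases x, cases y)
    have i: "i < m" "j < n" "i' < m" "j' < n" using xI yI xy by auto
    have e: "?G (i, j) = ?G (i', j')" using e0 xy by simp
    have h: "\<And>z. z \<in> ?G (i, j) \<longleftrightarrow> z \<in> ?G (i', j')" using e by simp
    have "i + (m - 2 - i) + 2 \<le> m \<longleftrightarrow> i' + (m - 2 - i) + 2 \<le> m"
      using h[of "replicate (m - 2 - i) a @ replicate n b"] unfolding sd split SW_a SW_b by simp
    moreover have "i + (m - 2 - i') + 2 \<le> m \<longleftrightarrow> i' + (m - 2 - i') + 2 \<le> m"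
      using h[of "replicate (m - 2 - i') a @ replicate n b"] unfolding sd split SW_a SW_b by simp
    moreover have "j + (n - 2 - j) + 2 \<le> n \<longleftrightarrow> j' + (n - 2 - j) + 2 \<le> n"
      using h[of "replicate m a @ replicate (n - 2 - j) b"] unfolding sd split SW_a SW_b by simp
    moreover have "j + (n - 2 - j') + 2 \<le> n \<longleftrightarrow> j' + (n - 2 - j') + 2 \<le> n"
      using h[of "replicate m a @ replicate (n - 2 - j') b"] unfolding sd split SW_a SW_b by simp
    ultimately have "i = i' \<and> j = j'" using i thrA[of i m i'] thrA[of j n j'] by blast
    then show "x = y" using xy by simp
  qed
qed

lemma suf_int: "kappa \<Sigma> (DK \<Sigma> a c m \<inter> DK \<Sigma> b d n) = m * n"
proof (rule kappa_pair2[where f="(\<inter>)", OF quot_int])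
  let ?G = "\<lambda>(i,j). DS \<Sigma> a c m i \<inter> DS \<Sigma> b d n j"
  show "inj_on ?G ({..<m} \<times> {..<n})"
  proof (rule inj_onI)
    fix x y assume xI: "x \<in> {..<m} \<times> {..<n}" and yI: "y \<in> {..<m} \<times> {..<n}" and e0: "?G x = ?G y"
    obtain i j i' j' where xy: "x = (i, j)" "y = (i', j')" by (cases x, cases y)
    have i: "i < m" "j < n" "i' < m" "j' < n" using xI yI xy by auto
    have e: "?G (i, j) = ?G (i', j')" using e0 xy by simp
    have h: "\<And>z. z \<in> ?G (i, j) \<longleftrightarrow> z \<in> ?G (i', j')" using e by simp
    have "i + (m - 2 - i) + 2 \<le> m \<longleftrightarrow> i' + (m - 2 - i) + 2 \<le> m"
      using h[of "replicate (m - 2 - i) a @ [d]"] SV_b unfolding Int_iff split SV_a by simp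
    moreover have "i + (m - 2 - i') + 2 \<le> m \<longleftrightarrow> i' + (m - 2 - i') + 2 \<le> m"
      using h[of "replicate (m - 2 - i') a @ [d]"] SV_b unfolding Int_iff split SV_a by simp
    moreover have "j + (n - 2 - j) + 2 \<le> n \<longleftrightarrow> j' + (n - 2 - j) + 2 \<le> n"
      using h[of "c # replicate (n - 2 - j) b"] SU_a unfolding Int_iff split SU_b by simp
    moreover have "j + (n - 2 - j') + 2 \<le> n \<longleftrightarrow> j' + (n - 2 - j') + 2 \<le> n"
      using h[of "c # replicate (n - 2 - j') b"] SU_a unfolding Int_iff split SU_b by simp
    ultimately have "i = i' \<and> j = j'" using i thrA[of i m i'] thrA[of j n j'] by blast
    then show "x = y" using xy by simp
  qed
qed

lemma suf_diff: "kappa \<Sigma> (DK \<Sigma> a c m - DK \<Sigma> b d n) = m * n"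
proof (rule kappa_pair2[where f="(-)", OF quot_diff])
  let ?G = "\<lambda>(i,j). DS \<Sigma> a c m i - DS \<Sigma> b d n j"
  show "inj_on ?G ({..<m} \<times> {..<n})"
  proof (rule inj_onI)
    fix x y assume xI: "x \<in> {..<m} \<times> {..<n}" and yI: "y \<in> {..<m} \<times> {..<n}" and e0: "?G x = ?G y"
    obtain i j i' j' where xy: "x = (i, j)" "y = (i', j')" by (cases x, cases y)
    have i: "i < m" "j < n" "i' < m" "j' < n" using xI yI xy by auto
    have e: "?G (i, j) = ?G (i', j')" using e0 xy by simp
    have h: "\<And>z. z \<in> ?G (i, j) \<longleftrightarrow> z \<in> ?G (i', j')" using e by simp
    have "i + (m - 2 - i) + 2 \<le> m \<longleftrightarrow> i' + (m - 2 - i) + 2 \<le> m"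
      using h[of "replicate (m - 2 - i) a @ replicate n b"] unfolding Diff_iff split SW_a SW_b by simp
    moreover have "i + (m - 2 - i') + 2 \<le> m \<longleftrightarrow> i' + (m - 2 - i') + 2 \<le> m"
      using h[of "replicate (m - 2 - i') a @ replicate n b"] unfolding Diff_iff split SW_a SW_b by simp
    moreover have "j + (n - 1 - j) + 2 \<le> n \<longleftrightarrow> j' + (n - 1 - j) + 2 \<le> n"
      using h[of "c # replicate (n - 1 - j) b"] SU_a unfolding Diff_iff split SU_b by simp
    moreover have "j + (n - 1 - j') + 2 \<le> n \<longleftrightarrow> j' + (n - 1 - j') + 2 \<le> n"
      using h[of "c # replicate (n - 1 - j') b"] SU_a unfolding Diff_iff split SU_b by simp
    ultimately have "i = i' \<and> j = j'" using i thrA[of i m i'] thrB[of j n j'] by blast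
    then show "x = y" using xy by simp
  qed
qed

end

lemma four_elems:
  assumes "4 \<le> card (S :: 'a set)"
  obtains a b c d where "a \<in> S" "b \<in> S" "c \<in> S" "d \<in> S"
    "a \<noteq> b" "a \<noteq> c" "a \<noteq> d" "b \<noteq> c" "b \<noteq> d" "c \<noteq> d"
proof -
  have "Suc 3 \<le> card S" using assms by simp
  then obtain a A1 where A1: "S = insert a A1" "a \<notin> A1" "3 \<le> card A1"
    using card_le_Suc_iff[of 3 S] by blast
  then have "Suc 2 \<le> card A1" by simp
  then obtain b A2 where A2: "A1 = insert b A2" "b \<notin> A2" "2 \<le> card A2"
    using card_le_Suc_iff[of 2 A1] by blast
  then have "Suc 1 \<le> card A2" by simp
  then obtain c A3 where A3: "A2 = insert c A3" "c \<notin> A3" "1 \<le> card A3"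
    using card_le_Suc_iff[of 1 A2] by blast
  then have "Suc 0 \<le> card A3" by simp
  then obtain d A4 where A4: "A3 = insert d A4" "d \<notin> A4"
    using card_le_Suc_iff[of 0 A3] by blast
  show ?thesis
  proof (rule that)
    show "a \<in> S" "b \<in> S" "c \<in> S" "d \<in> S" using A1 A2 A3 A4 by auto
    show "a \<noteq> b" "a \<noteq> c" "a \<noteq> d" "b \<noteq> c" "b \<noteq> d" "c \<noteq> d" using A1 A2 A3 A4 by auto
  qed
qed

theorem theorem2:
  fixes \<Sigma> :: "'a set"
  assumes "finite \<Sigma>" and "\<Sigma> \<noteq> {}"
  shows
   "(\<forall>K L m n. regular \<Sigma> K \<and> regular \<Sigma> L \<and> kappa \<Sigma> K = m \<and> kappa \<Sigma> L = n \<and> 2 \<le> m \<and> 2 \<le> n \<and>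
       ((prefix_closed K \<and> prefix_closed L) \<or> (factor_closed K \<and> factor_closed L) \<or>
        (subword_closed K \<and> subword_closed L)) \<longrightarrow>
       kappa \<Sigma> (K \<inter> L) \<le> m * n - (m + n - 2) \<and>
       kappa \<Sigma> (K \<union> L) \<le> m * n \<and>
       kappa \<Sigma> (symdiff K L) \<le> m * n \<and>
       kappa \<Sigma> (K - L) \<le> m * n - (n - 1))
  \<and> (\<forall>K L m n. regular \<Sigma> K \<and> regular \<Sigma> L \<and> kappa \<Sigma> K = m \<and> kappa \<Sigma> L = n \<and> 2 \<le> m \<and> 2 \<le> n \<and>
       suffix_closed K \<and> suffix_closed L \<longrightarrow>
       kappa \<Sigma> (K \<union> L) \<le> m * n \<and>
       kappa \<Sigma> (K \<inter> L) \<le> m * n \<and>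
       kappa \<Sigma> (K - L) \<le> m * n \<and>
       kappa \<Sigma> (symdiff K L) \<le> m * n)
  \<and> (4 \<le> card \<Sigma> \<longrightarrow> (\<forall>m n. 2 \<le> m \<and> 2 \<le> n \<longrightarrow>
       (\<forall>P \<in> {prefix_closed, factor_closed, subword_closed}.
          (\<exists>K L. regular \<Sigma> K \<and> regular \<Sigma> L \<and> P K \<and> P L \<and> kappa \<Sigma> K = m \<and> kappa \<Sigma> L = n \<and>
                 kappa \<Sigma> (K \<inter> L) = m * n - (m + n - 2)) \<and>
          (\<exists>K L. regular \<Sigma> K \<and> regular \<Sigma> L \<and> P K \<and> P L \<and> kappa \<Sigma> K = m \<and> kappa \<Sigma> L = n \<and>
                 kappa \<Sigma> (K \<union> L) = m * n) \<and>
          (\<exists>K L. regular \<Sigma> K \<and> regular \<Sigma> L \<and> P K \<and> P L \<and> kappa \<Sigma> K = m \<and> kappa \<Sigma> L = n \<and>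
                 kappa \<Sigma> (symdiff K L) = m * n) \<and>
          (\<exists>K L. regular \<Sigma> K \<and> regular \<Sigma> L \<and> P K \<and> P L \<and> kappa \<Sigma> K = m \<and> kappa \<Sigma> L = n \<and>
                 kappa \<Sigma> (K - L) = m * n - (n - 1))) \<and>
       (\<forall>op \<in> {(\<union>), (\<inter>), (-), symdiff}.
          (\<exists>K L. regular \<Sigma> K \<and> regular \<Sigma> L \<and> suffix_closed K \<and> suffix_closed L \<and>
                 kappa \<Sigma> K = m \<and> kappa \<Sigma> L = n \<and> kappa \<Sigma> (op K L) = m * n))))"
proof (intro conjI allI impI)
  fix K L :: "'a list set" and m n :: nat
  assume H: "regular \<Sigma> K \<and> regular \<Sigma> L \<and> kappa \<Sigma> K = m \<and> kappa \<Sigma> L = n \<and> 2 \<le> m \<and> 2 \<le> n \<and>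
       ((prefix_closed K \<and> prefix_closed L) \<or> (factor_closed K \<and> factor_closed L) \<or>
        (subword_closed K \<and> subword_closed L))"
  then have pc: "prefix_closed K" "prefix_closed L"
    using factor_prefix subword_factor by blast+
  have U: "kappa \<Sigma> (K \<inter> L) \<le> m * n - (m + n - 2) \<and>
       kappa \<Sigma> (K \<union> L) \<le> m * n \<and>
       kappa \<Sigma> (symdiff K L) \<le> m * n \<and>
       kappa \<Sigma> (K - L) \<le> m * n - (n - 1)"
    using upper_prefix[of \<Sigma> K L m n] H pc by blast
  show "kappa \<Sigma> (K \<inter> L) \<le> m * n - (m + n - 2)" using U by blast
  show "kappa \<Sigma> (K \<union> L) \<le> m * n" using U by blast
  show "kappa \<Sigma> (symdiff K L) \<le> m * n" using U by blast
  show "kappa \<Sigma> (K - L) \<le> m * n - (n - 1)" using U by blast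
next
  fix K L :: "'a list set" and m n :: nat
  assume H: "regular \<Sigma> K \<and> regular \<Sigma> L \<and> kappa \<Sigma> K = m \<and> kappa \<Sigma> L = n \<and> 2 \<le> m \<and> 2 \<le> n \<and>
       suffix_closed K \<and> suffix_closed L"
  have U: "kappa \<Sigma> (K \<union> L) \<le> m * n \<and>
       kappa \<Sigma> (K \<inter> L) \<le> m * n \<and>
       kappa \<Sigma> (K - L) \<le> m * n \<and>
       kappa \<Sigma> (symdiff K L) \<le> m * n"
    using upper_suffix[of \<Sigma> K m L n] H by blast
  show "kappa \<Sigma> (K \<union> L) \<le> m * n" using U by blast
  show "kappa \<Sigma> (K \<inter> L) \<le> m * n" using U by blast
  show "kappa \<Sigma> (K - L) \<le> m * n" using U by blast
  show "kappa \<Sigma> (symdiff K L) \<le> m * n" using U by blast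
next
  assume c4: "4 \<le> card \<Sigma>"
  obtain a b c d where el: "a \<in> \<Sigma>" "b \<in> \<Sigma>" "c \<in> \<Sigma>" "d \<in> \<Sigma>"
    and dist: "a \<noteq> b" "a \<noteq> c" "a \<noteq> d" "b \<noteq> c" "b \<noteq> d" "c \<noteq> d"
    using four_elems[OF c4] by blast
  fix m n :: nat
  assume mn: "2 \<le> m \<and> 2 \<le> n"
  then have m: "2 \<le> m" and n: "2 \<le> n" by auto
  let ?K = "CK \<Sigma> a m" and ?L = "CK \<Sigma> b n"
  have rK: "regular \<Sigma> ?K" using regular_CK[OF el(1) m] .
  have rL: "regular \<Sigma> ?L" using regular_CK[OF el(2) n] .
  have kK: "kappa \<Sigma> ?K = m" using kappa_CK[OF el(1) m] .
  have kL: "kappa \<Sigma> ?L = n" using kappa_CK[OF el(2) n] .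
  have i1: "kappa \<Sigma> (?K \<inter> ?L) = m * n - (m + n - 2)" using sub_int[OF el(1,2) dist(1) m n] .
  have i2: "kappa \<Sigma> (?K \<union> ?L) = m * n" using sub_un[OF el(1,2) dist(1) m n] .
  have i3: "kappa \<Sigma> (symdiff ?K ?L) = m * n" using sub_sd[OF el(1,2) dist(1) m n] .
  have i4: "kappa \<Sigma> (?K - ?L) = m * n - (n - 1)" using sub_diff[OF el(1,2) dist(1) m n] .
  show "\<forall>P \<in> {prefix_closed, factor_closed, subword_closed}.
          (\<exists>K L. regular \<Sigma> K \<and> regular \<Sigma> L \<and> P K \<and> P L \<and> kappa \<Sigma> K = m \<and> kappa \<Sigma> L = n \<and>
                 kappa \<Sigma> (K \<inter> L) = m * n - (m + n - 2)) \<and>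
          (\<exists>K L. regular \<Sigma> K \<and> regular \<Sigma> L \<and> P K \<and> P L \<and> kappa \<Sigma> K = m \<and> kappa \<Sigma> L = n \<and>
                 kappa \<Sigma> (K \<union> L) = m * n) \<and>
          (\<exists>K L. regular \<Sigma> K \<and> regular \<Sigma> L \<and> P K \<and> P L \<and> kappa \<Sigma> K = m \<and> kappa \<Sigma> L = n \<and>
                 kappa \<Sigma> (symdiff K L) = m * n) \<and>
          (\<exists>K L. regular \<Sigma> K \<and> regular \<Sigma> L \<and> P K \<and> P L \<and> kappa \<Sigma> K = m \<and> kappa \<Sigma> L = n \<and>
                 kappa \<Sigma> (K - L) = m * n - (n - 1))"
  proof
    fix P :: "'a list set \<Rightarrow> bool"
    assume P: "P \<in> {prefix_closed, factor_closed, subword_closed}"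
    have PK: "P ?K" and PL: "P ?L"
    proof -
      have s: "subword_closed ?K" "subword_closed ?L" by (rule CK_subword)+
      from P have "P = prefix_closed \<or> P = factor_closed \<or> P = subword_closed" by simp
      then show "P ?K" "P ?L" using s factor_prefix subword_factor by blast+
    qed
    show "(\<exists>K L. regular \<Sigma> K \<and> regular \<Sigma> L \<and> P K \<and> P L \<and> kappa \<Sigma> K = m \<and> kappa \<Sigma> L = n \<and>
                 kappa \<Sigma> (K \<inter> L) = m * n - (m + n - 2)) \<and>
          (\<exists>K L. regular \<Sigma> K \<and> regular \<Sigma> L \<and> P K \<and> P L \<and> kappa \<Sigma> K = m \<and> kappa \<Sigma> L = n \<and>
                 kappa \<Sigma> (K \<union> L) = m * n) \<and>
          (\<exists>K L. regular \<Sigma> K \<and> regular \<Sigma> L \<and> P K \<and> P L \<and> kappa \<Sigma> K = m \<and> kappa \<Sigma> L = n \<and>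
                 kappa \<Sigma> (symdiff K L) = m * n) \<and>
          (\<exists>K L. regular \<Sigma> K \<and> regular \<Sigma> L \<and> P K \<and> P L \<and> kappa \<Sigma> K = m \<and> kappa \<Sigma> L = n \<and>
                 kappa \<Sigma> (K - L) = m * n - (n - 1))"
      using rK rL PK PL kK kL i1 i2 i3 i4 by blast
  qed
  let ?K2 = "DK \<Sigma> a c m" and ?L2 = "DK \<Sigma> b d n"
  have rK2: "regular \<Sigma> ?K2" using regular_DK[OF el(1) dist(2) m] .
  have rL2: "regular \<Sigma> ?L2" using regular_DK[OF el(2) dist(5) n] .
  have kK2: "kappa \<Sigma> ?K2 = m" using kappa_DK[OF el(1) dist(2) m] .
  have kL2: "kappa \<Sigma> ?L2 = n" using kappa_DK[OF el(2) dist(5) n] .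
  have sK2: "suffix_closed ?K2" "suffix_closed ?L2" by (rule DK_suffix)+
  have j1: "kappa \<Sigma> (?K2 \<union> ?L2) = m * n" using suf_un[OF el dist m n] .
  have j2: "kappa \<Sigma> (?K2 \<inter> ?L2) = m * n" using suf_int[OF el dist m n] .
  have j3: "kappa \<Sigma> (?K2 - ?L2) = m * n" using suf_diff[OF el dist m n] .
  have j4: "kappa \<Sigma> (symdiff ?K2 ?L2) = m * n" using suf_sd[OF el dist m n] .
  show "\<forall>op \<in> {(\<union>), (\<inter>), (-), symdiff}.
          (\<exists>K L. regular \<Sigma> K \<and> regular \<Sigma> L \<and> suffix_closed K \<and> suffix_closed L \<and>
                 kappa \<Sigma> K = m \<and> kappa \<Sigma> L = n \<and> kappa \<Sigma> (op K L) = m * n)"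
  proof
    fix op :: "'a list set \<Rightarrow> 'a list set \<Rightarrow> 'a list set"
    assume "op \<in> {(\<union>), (\<inter>), (-), symdiff}"
    then have "kappa \<Sigma> (op ?K2 ?L2) = m * n" using j1 j2 j3 j4 by auto
    then show "\<exists>K L. regular \<Sigma> K \<and> regular \<Sigma> L \<and> suffix_closed K \<and> suffix_closed L \<and>
                 kappa \<Sigma> K = m \<and> kappa \<Sigma> L = n \<and> kappa \<Sigma> (op K L) = m * n"
      using rK2 rL2 sK2 kK2 kL2 by blast
  qed
qed

end
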